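(* Let $\eta>0$, $L>0$, and for each $t$ let $\widehat\varphi_t$ be a convex function with $C\subset\operatorname{dom}\partial\widehat\varphi_t$ whose subdifferential is $L$-Lipschitz on $C$, i.e. $\|g-h\|\le L\|x-y\|$ for all $x,y\in C$, $g\in\partial\widehat\varphi_t(x)$, $h\in\partial\widehat\varphi_t(y)$. Run OGP: $\widetilde{x}_{t+1}=P_C(\widetilde{x}_t-\eta x_t^* )$ with $x_t^*\in\partial\varphi_t(x_t)$, $x_{t+1}=P_C(\widetilde{x}_{t+1}-\eta\widehat{x}_{t+1}^* )$, $\widetilde x_1\in C$, with predictions $\widehat{x}_t^*\in\partial\widehat\varphi_t(\widetilde{x}_t)$. Then for every $T\ge1$ and every $z_1,\dots,z_T\in C$, with $P_T=\sum_{t=2}^T\|z_t-z_{t-1}\|$, $$\sum_{t=1}^T\varphi_t(x_t)-\varphi_t(z_t)\le \frac{\rho(\rho+2P_T)}{2\eta}+\eta\sum_{t=1}^T\Big(\sup_{x\in C,\ g\in\partial\varphi_t(x),\ \widehat g\in\partial\widehat\varphi_t(x)}\|g-\widehat g\|^2+\mathbf 1\{\eta>\tfrac{1}{\sqrt2 L}\}\,L^2\|x_t-\widetilde{x}_t\|^2\Big).$$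
   Context: $H$ is a real Hilbert space; $C\subset H$ is nonempty, closed, convex with diameter $\rho=\sup_{x,y\in C}\|x-y\|<\infty$; $P_C$ is the metric projection onto $C$; each loss $\varphi_t$ is convex with $C\subset\operatorname{dom}\partial\varphi_t$; $\mathbf 1\{\cdot\}$ is the zero-one indicator. *)

theory Defs
  imports "HOL-Analysis.Analysis"
begin

definition ereal_convex :: "('a::real_vector \<Rightarrow> ereal) \<Rightarrow> bool" where
  "ereal_convex f \<longleftrightarrow> convex {(x, r::real). f x \<le> ereal r}"

definition subdiff :: "('a::real_inner \<Rightarrow> ereal) \<Rightarrow> 'a \<Rightarrow> 'a set" where
  "subdiff f x = {g. f x \<noteq> \<infinity> \<and> f x \<noteq> -\<infinity> \<and>
       (\<forall>y. f y \<ge> f x + ereal (g \<bullet> (y - x)))}"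

definition dom_subdiff :: "('a::real_inner \<Rightarrow> ereal) \<Rightarrow> 'a set" where
  "dom_subdiff f = {x. subdiff f x \<noteq> {}}"

definition metric_proj :: "'a::real_inner set \<Rightarrow> 'a \<Rightarrow> 'a" where
  "metric_proj C y = (THE p. p \<in> C \<and> (\<forall>z\<in>C. norm (y - p) \<le> norm (y - z)))"

end

theory Submission
  imports Defs
begin


lemma parallelogram:
  fixes a b :: "'a::real_inner"
  shows "(norm (a - b))\<^sup>2 + (norm (a + b))\<^sup>2 = 2 * (norm a)\<^sup>2 + 2 * (norm b)\<^sup>2"
  by (simp add: power2_norm_eq_inner inner_add inner_diff inner_commute algebra_simps)

lemma closest_exists:
  fixes C :: "'a::{real_inner, complete_space} set"
  assumes ne: "C \<noteq> {}" and cl: "closed C" and cv: "convex C"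
  shows "\<exists>p\<in>C. \<forall>z\<in>C. dist y p \<le> dist y z"
proof -
  define d where "d = infdist y C"
  have d0: "0 \<le> d" unfolding d_def by (rule infdist_nonneg)
  have dle: "\<And>z. z \<in> C \<Longrightarrow> d \<le> dist y z" unfolding d_def by (rule infdist_le)
  have "\<forall>n. \<exists>p\<in>C. dist y p < d + 1 / (real n + 1)"
  proof
    fix n
    have "Inf (dist y ` C) < d + 1 / (real n + 1)"
      using infdist_notempty[OF ne, of y] d_def by (simp add: add_pos_pos)
    then show "\<exists>p\<in>C. dist y p < d + 1 / (real n + 1)"
      using ne by (subst (asm) cInf_less_iff) auto
  qed
  then obtain p where pC: "\<And>n. p n \<in> C" and pd: "\<And>n. dist y (p n) < d + 1 / (real n + 1)"
    by metis
  define K where "K = 2 * d + 1"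
  have sq: "(dist y (p n))\<^sup>2 \<le> d\<^sup>2 + K / (real n + 1)" for n
  proof -
    define a where "a = 1 / (real n + 1)"
    have a0: "0 < a" "a \<le> 1" unfolding a_def by (auto simp: field_simps)
    have "(dist y (p n))\<^sup>2 \<le> (d + a)\<^sup>2"
      using pd[of n] d0 a0 unfolding a_def by (intro power_mono) auto
    also have "\<dots> = d\<^sup>2 + (2*d + a) * a" by (simp add: power2_eq_square algebra_simps)
    also have "\<dots> \<le> d\<^sup>2 + K * a" unfolding K_def using a0 by (intro add_left_mono mult_right_mono) auto
    finally show ?thesis unfolding a_def by simp
  qed
  have par: "(norm (p m - p n))\<^sup>2 \<le> 2 * K / (real m + 1) + 2 * K / (real n + 1)" for m n
  proof -
    have mid: "(1/2) *\<^sub>R p m + (1/2) *\<^sub>R p n \<in> C"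
      using cv pC by (intro convexD) auto
    have "norm ((y - p m) + (y - p n)) = 2 * norm (y - ((1/2) *\<^sub>R p m + (1/2) *\<^sub>R p n))"
    proof -
      have "(y - p m) + (y - p n) = 2 *\<^sub>R (y - ((1/2) *\<^sub>R p m + (1/2) *\<^sub>R p n))"
        by (simp add: algebra_simps scaleR_2)
      then show ?thesis by simp
    qed
    also have "\<dots> \<ge> 2 * d" using dle[OF mid] by (simp add: dist_norm)
    finally have h: "2 * d \<le> norm ((y - p m) + (y - p n))" .
    have h2: "(2*d)\<^sup>2 \<le> (norm ((y - p m) + (y - p n)))\<^sup>2"
      using h d0 by (intro power_mono) auto
    have eq: "(norm (p m - p n))\<^sup>2 = 2 * (norm (y - p m))\<^sup>2 + 2 * (norm (y - p n))\<^sup>2 - (norm ((y - p m) + (y - p n)))\<^sup>2"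
      using parallelogram[of "y - p n" "y - p m"] by (simp add: algebra_simps)
    show ?thesis using eq h2 sq[of m] sq[of n] by (simp add: dist_norm power2_eq_square)
  qed
  have K0: "0 < K" unfolding K_def using d0 by simp
  have cau: "Cauchy p"
  proof (rule CauchyI)
    fix e :: real assume e: "0 < e"
    obtain M :: nat where M: "4 * K / e\<^sup>2 < real M" using reals_Archimedean2 by blast
    have "\<forall>m\<ge>M. \<forall>n\<ge>M. norm (p m - p n) < e"
    proof (intro allI impI)
      fix m n assume mn: "M \<le> m" "M \<le> n"
      have e2: "0 < e\<^sup>2" using e by simp
      have "4 * K < e\<^sup>2 * real M" using M e2 by (simp add: field_simps)
      have b1: "2 * K / (real m + 1) \<le> 2 * K / (real M + 1)"
        using mn K0 by (intro divide_left_mono) auto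
      have b2: "2 * K / (real n + 1) \<le> 2 * K / (real M + 1)"
        using mn K0 by (intro divide_left_mono) auto
      have b3: "4 * K / (real M + 1) < e\<^sup>2"
        using \<open>4 * K < e\<^sup>2 * real M\<close> e2 by (simp add: field_simps) (smt (verit) e2)
      have "(norm (p m - p n))\<^sup>2 < e\<^sup>2" using par[of m n] b1 b2 b3 by simp
      then show "norm (p m - p n) < e" using e by (meson power2_less_imp_less less_imp_le)
    qed
    then show "\<exists>M. \<forall>m\<ge>M. \<forall>n\<ge>M. norm (p m - p n) < e" by blast
  qed
  then obtain q where q: "p \<longlonglongrightarrow> q" using Cauchy_convergent convergent_def by blast
  have qC: "q \<in> C" using closed_sequentially[OF cl pC q] .
  have lim1: "(\<lambda>n. dist y (p n)) \<longlonglongrightarrow> dist y q" by (intro tendsto_intros q)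
  have lim2: "(\<lambda>n. d + 1 / (real n + 1)) \<longlonglongrightarrow> d + 0"
  proof (intro tendsto_intros)
    show "(\<lambda>n. 1 / (real n + 1)) \<longlonglongrightarrow> 0"
      using LIMSEQ_inverse_real_of_nat by (simp add: inverse_eq_divide add.commute)
  qed
  have "dist y q \<le> d + 0"
    using lim1 lim2 pd by (intro LIMSEQ_le[OF lim1 lim2]) (auto intro: less_imp_le)
  then show ?thesis using qC dle by force
qed

lemma metric_proj:
  fixes C :: "'a::{real_inner, complete_space} set"
  assumes ne: "C \<noteq> {}" and cl: "closed C" and cv: "convex C"
  shows "metric_proj C y \<in> C" "\<And>z. z \<in> C \<Longrightarrow> inner (y - metric_proj C y) (z - metric_proj C y) \<le> 0"
proof -
  obtain p where p: "p \<in> C" "\<forall>z\<in>C. dist y p \<le> dist y z" using closest_exists[OF assms] by blast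
  have "metric_proj C y = p"
    unfolding metric_proj_def
  proof (rule the_equality)
    show "p \<in> C \<and> (\<forall>z\<in>C. norm (y - p) \<le> norm (y - z))" using p by (simp add: dist_norm)
  next
    fix p' assume "p' \<in> C \<and> (\<forall>z\<in>C. norm (y - p') \<le> norm (y - z))"
    then show "p' = p" using any_closest_point_unique[OF cv cl _ p(1), of p' y] p by (simp add: dist_norm)
  qed
  then show "metric_proj C y \<in> C" "\<And>z. z \<in> C \<Longrightarrow> inner (y - metric_proj C y) (z - metric_proj C y) \<le> 0"
    using p any_closest_point_dot[OF cv cl p(1)] by auto
qed


lemma polar: fixes a b :: "'a::real_inner"
  shows "inner a b = ((norm (a + b))\<^sup>2 - (norm a)\<^sup>2 - (norm b)\<^sup>2) / 2"
  by (simp add: power2_norm_eq_inner inner_add inner_commute algebra_simps)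

lemma step_ineq:
  fixes u w v z g h q :: "'a::real_inner"
  assumes eta: "\<eta> > 0" and L: "L > 0"
    and vi1: "inner (u - \<eta> *\<^sub>R g - w) (z - w) \<le> 0"
    and vi2: "inner (u - \<eta> *\<^sub>R h - v) (w - v) \<le> 0"
    and lip: "norm (q - h) \<le> L * norm (v - u)"
  shows "inner g (v - z) \<le> ((norm (u - z))\<^sup>2 - (norm (w - z))\<^sup>2) / (2 * \<eta>)
     + \<eta> * ((norm (g - q))\<^sup>2 + (if \<eta> > 1 / (sqrt 2 * L) then 1 else 0) * L\<^sup>2 * (norm (v - u))\<^sup>2)"
proof -
  define e where "e = g - h"
  have i1: "\<eta> * inner g (w - z) \<le> ((norm (u - z))\<^sup>2 - (norm (w - z))\<^sup>2 - (norm (u - w))\<^sup>2) / 2"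
  proof -
    have "\<eta> * inner g (w - z) \<le> inner (u - w) (w - z)"
      using vi1 by (simp add: inner_diff_left inner_diff_right inner_commute algebra_simps)
    also have "\<dots> = ((norm (u - z))\<^sup>2 - (norm (w - z))\<^sup>2 - (norm (u - w))\<^sup>2) / 2"
      using polar[of "u - w" "w - z"] by simp
    finally show ?thesis .
  qed
  have i2: "\<eta> * inner h (v - w) \<le> ((norm (u - w))\<^sup>2 - (norm (v - w))\<^sup>2 - (norm (u - v))\<^sup>2) / 2"
  proof -
    have "\<eta> * inner h (v - w) \<le> inner (u - v) (v - w)"
      using vi2 by (simp add: inner_diff_left inner_diff_right inner_commute algebra_simps)
    also have "\<dots> = ((norm (u - w))\<^sup>2 - (norm (v - w))\<^sup>2 - (norm (u - v))\<^sup>2) / 2"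
      using polar[of "u - v" "v - w"] by simp
    finally show ?thesis .
  qed
  have i3: "\<eta> * inner e (v - w) \<le> \<eta>\<^sup>2 * (norm e)\<^sup>2 / 2 + (norm (v - w))\<^sup>2 / 2"
  proof -
    have "\<eta> * inner e (v - w) \<le> \<eta> * (norm e * norm (v - w))"
      using eta by (intro mult_left_mono) (auto intro: order_trans[OF _ norm_cauchy_schwarz])
    also have "\<dots> \<le> \<eta>\<^sup>2 * (norm e)\<^sup>2 / 2 + (norm (v - w))\<^sup>2 / 2"
      using sum_squares_ge_zero[of "\<eta> * norm e - norm (v - w)" 0]
      by (simp add: power2_eq_square algebra_simps)
    finally show ?thesis .
  qed
  have split: "\<eta> * inner g (v - z) = \<eta> * inner g (w - z) + \<eta> * inner h (v - w) + \<eta> * inner e (v - w)"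
    unfolding e_def by (simp add: inner_diff_left inner_diff_right algebra_simps)
  have nuv: "norm (u - v) = norm (v - u)" by (simp add: norm_minus_commute)
  define r where "r = (norm (v - u))\<^sup>2"
  have r0: "0 \<le> r" unfolding r_def by simp
  have main: "\<eta> * inner g (v - z) \<le> ((norm (u - z))\<^sup>2 - (norm (w - z))\<^sup>2) / 2 + \<eta>\<^sup>2 * (norm e)\<^sup>2 / 2 - r / 2"
    using i1 i2 i3 split nuv unfolding r_def by (simp add: field_simps)
  have ne: "norm e \<le> norm (g - q) + L * norm (v - u)"
  proof -
    have "norm e \<le> norm (g - q) + norm (q - h)" unfolding e_def
      using norm_triangle_ineq[of "g - q" "q - h"] by simp
    then show ?thesis using lip by simp
  qed
  have ne2: "(norm e)\<^sup>2 \<le> 2 * (norm (g - q))\<^sup>2 + 2 * L\<^sup>2 * r"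
  proof -
    have "(norm e)\<^sup>2 \<le> (norm (g - q) + L * norm (v - u))\<^sup>2"
      using ne by (intro power_mono) auto
    also have "\<dots> \<le> 2 * (norm (g - q))\<^sup>2 + 2 * L\<^sup>2 * r"
      unfolding r_def
      using sum_squares_ge_zero[of "norm (g - q) - L * norm (v - u)" 0]
      by (simp add: power2_eq_square algebra_simps)
    finally show ?thesis .
  qed
  define I where "I = (if \<eta> > 1 / (sqrt 2 * L) then 1 else 0 :: real)"
  have ind: "\<eta>\<^sup>2 * L\<^sup>2 * r - r / 2 \<le> \<eta>\<^sup>2 * I * L\<^sup>2 * r"
  proof (cases "\<eta> > 1 / (sqrt 2 * L)")
    case True then show ?thesis unfolding I_def using r0 by simp
  next
    case False
    then have "\<eta> * (sqrt 2 * L) \<le> 1" using L by (simp add: field_simps)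
    then have "(\<eta> * (sqrt 2 * L))\<^sup>2 \<le> 1" using eta L by (simp add: power_le_one)
    then have "2 * \<eta>\<^sup>2 * L\<^sup>2 \<le> 1" by (simp add: power_mult_distrib)
    then have "\<eta>\<^sup>2 * L\<^sup>2 * r \<le> r / 2" using r0 mult_right_mono[of "2 * \<eta>\<^sup>2 * L\<^sup>2" 1 r] by simp
    then show ?thesis using False unfolding I_def by simp
  qed
  have "\<eta> * inner g (v - z) \<le> ((norm (u - z))\<^sup>2 - (norm (w - z))\<^sup>2) / 2 + \<eta>\<^sup>2 * ((norm (g - q))\<^sup>2 + I * L\<^sup>2 * r)"
  proof -
    have "\<eta>\<^sup>2 * (norm e)\<^sup>2 / 2 \<le> \<eta>\<^sup>2 * (2 * (norm (g - q))\<^sup>2 + 2 * L\<^sup>2 * r) / 2"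
      using ne2 by (intro divide_right_mono mult_left_mono) auto
    then show ?thesis using main ind by (simp add: algebra_simps)
  qed
  then have "inner g (v - z) \<le> (((norm (u - z))\<^sup>2 - (norm (w - z))\<^sup>2) / 2 + \<eta>\<^sup>2 * ((norm (g - q))\<^sup>2 + I * L\<^sup>2 * r)) / \<eta>"
    using eta by (simp add: pos_le_divide_eq mult.commute)
  also have "\<dots> = ((norm (u - z))\<^sup>2 - (norm (w - z))\<^sup>2) / (2 * \<eta>) + \<eta> * ((norm (g - q))\<^sup>2 + I * L\<^sup>2 * r)"
    using eta by (simp add: field_simps power2_eq_square)
  finally show ?thesis unfolding I_def r_def .
qed


lemma sqdiff_bound:
  fixes a z z' :: "'a::real_inner"
  assumes "norm (a - z) \<le> \<rho>" "norm (a - z') \<le> \<rho>"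
  shows "(norm (a - z'))\<^sup>2 - (norm (a - z))\<^sup>2 \<le> 2 * \<rho> * norm (z' - z)"
proof -
  have d: "norm (a - z') - norm (a - z) \<le> norm (z' - z)"
    using norm_triangle_ineq3[of "a - z'" "a - z"] by (simp add: norm_minus_commute)
  have s: "0 \<le> norm (a - z') + norm (a - z)" by simp
  have "(norm (a - z'))\<^sup>2 - (norm (a - z))\<^sup>2 = (norm (a - z') - norm (a - z)) * (norm (a - z') + norm (a - z))"
    by (simp add: power2_eq_square algebra_simps)
  also have "\<dots> \<le> norm (z' - z) * (norm (a - z') + norm (a - z))"
    using d s by (rule mult_right_mono)
  also have "\<dots> \<le> norm (z' - z) * (2 * \<rho>)"
    using assms by (intro mult_left_mono) auto
  finally show ?thesis by (simp add: algebra_simps)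
qed

lemma telescope:
  fixes xt z :: "nat \<Rightarrow> 'a::real_inner"
  assumes bnd: "\<And>t s. 1 \<le> t \<Longrightarrow> t \<le> T + 1 \<Longrightarrow> 1 \<le> s \<Longrightarrow> s \<le> T \<Longrightarrow> norm (xt t - z s) \<le> \<rho>"
    and n: "1 \<le> n" "n \<le> T"
  shows "(\<Sum>t=1..n. (norm (xt t - z t))\<^sup>2 - (norm (xt (t+1) - z t))\<^sup>2) + (norm (xt (n+1) - z n))\<^sup>2
     \<le> \<rho>\<^sup>2 + 2 * \<rho> * (\<Sum>t=2..n. norm (z t - z (t - 1)))"
  using n
proof (induction n rule: nat_induct_at_least)
  case base
  have "norm (xt 1 - z 1) \<le> \<rho>" using bnd[of 1 1] base by simp
  then have "(norm (xt 1 - z 1))\<^sup>2 \<le> \<rho>\<^sup>2" by (intro power_mono) auto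
  then show ?case by simp
next
  case (Suc n)
  have IH: "(\<Sum>t=1..n. (norm (xt t - z t))\<^sup>2 - (norm (xt (t+1) - z t))\<^sup>2) + (norm (xt (n+1) - z n))\<^sup>2
     \<le> \<rho>\<^sup>2 + 2 * \<rho> * (\<Sum>t=2..n. norm (z t - z (t - 1)))" using Suc by simp
  have key: "(norm (xt (n+1) - z (n+1)))\<^sup>2 - (norm (xt (n+1) - z n))\<^sup>2 \<le> 2 * \<rho> * norm (z (n+1) - z n)"
    using Suc by (intro sqdiff_bound bnd) auto
  have s1: "(\<Sum>t=1..Suc n. (norm (xt t - z t))\<^sup>2 - (norm (xt (t+1) - z t))\<^sup>2)
     = (\<Sum>t=1..n. (norm (xt t - z t))\<^sup>2 - (norm (xt (t+1) - z t))\<^sup>2) + ((norm (xt (n+1) - z (n+1)))\<^sup>2 - (norm (xt (n+2) - z (n+1)))\<^sup>2)"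
    by (simp add: sum.cl_ivl_Suc)
  have s2: "(\<Sum>t=2..Suc n. norm (z t - z (t - 1))) = (\<Sum>t=2..n. norm (z t - z (t - 1))) + norm (z (n+1) - z n)"
    using Suc by (simp add: sum.cl_ivl_Suc)
  show ?case using IH key unfolding s1 s2 by (simp add: algebra_simps)
qed

theorem corollary2:
  fixes C :: "'a::{real_inner, complete_space} set"
    and \<phi> \<phi>h :: "nat \<Rightarrow> 'a \<Rightarrow> ereal"
    and \<eta> L :: real
    and x xt xs xhs :: "nat \<Rightarrow> 'a"
    and T :: nat and z :: "nat \<Rightarrow> 'a"
  assumes C_ne: "C \<noteq> {}" and C_closed: "closed C" and C_convex: "convex C"
    and C_bounded: "bounded C"
    and eta_pos: "\<eta> > 0" and L_pos: "L > 0"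
    and phi_convex: "\<And>t. ereal_convex (\<phi> t)"
    and phi_dom: "\<And>t. C \<subseteq> dom_subdiff (\<phi> t)"
    and phih_convex: "\<And>t. ereal_convex (\<phi>h t)"
    and phih_dom: "\<And>t. C \<subseteq> dom_subdiff (\<phi>h t)"
    and phih_lip: "\<And>t u v g h. u \<in> C \<Longrightarrow> v \<in> C \<Longrightarrow> g \<in> subdiff (\<phi>h t) u \<Longrightarrow>
                      h \<in> subdiff (\<phi>h t) v \<Longrightarrow> norm (g - h) \<le> L * norm (u - v)"
    and xt1: "xt 1 \<in> C"
    and grad: "\<And>t. t \<ge> 1 \<Longrightarrow> xs t \<in> subdiff (\<phi> t) (x t)"
    and pred: "\<And>t. t \<ge> 1 \<Longrightarrow> xhs t \<in> subdiff (\<phi>h t) (xt t)"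
    and step_t: "\<And>t. t \<ge> 1 \<Longrightarrow> xt (t + 1) = metric_proj C (xt t - \<eta> *\<^sub>R xs t)"
    and step_x: "\<And>t. t \<ge> 1 \<Longrightarrow> x t = metric_proj C (xt t - \<eta> *\<^sub>R xhs t)"
    and T_ge: "T \<ge> 1"
    and z_in: "\<And>t. t \<in> {1..T} \<Longrightarrow> z t \<in> C"
  shows "ereal (\<Sum>t=1..T. real_of_ereal (\<phi> t (x t)) - real_of_ereal (\<phi> t (z t)))
    \<le> ereal (diameter C * (diameter C + 2 * (\<Sum>t=2..T. norm (z t - z (t - 1)))) / (2 * \<eta>))
       + ereal \<eta> * (\<Sum>t=1..T.
           (SUP (u, g, gh) \<in> {(u, g, gh). u \<in> C \<and> g \<in> subdiff (\<phi> t) u \<and> gh \<in> subdiff (\<phi>h t) u}.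
               ereal ((norm (g - gh))\<^sup>2))
           + ereal ((if \<eta> > 1 / (sqrt 2 * L) then 1 else 0) * L\<^sup>2 * (norm (x t - xt t))\<^sup>2))"
proof -
  define \<rho> where "\<rho> = diameter C"
  define P where "P = (\<Sum>t=2..T. norm (z t - z (t - 1)))"
  define I where "I = (if \<eta> > 1 / (sqrt 2 * L) then 1 else 0 :: real)"
  have rho0: "0 \<le> \<rho>" unfolding \<rho>_def using C_bounded by (rule diameter_ge_0)
  have diam: "\<And>a b. a \<in> C \<Longrightarrow> b \<in> C \<Longrightarrow> norm (a - b) \<le> \<rho>"
    unfolding \<rho>_def using diameter_bounded_bound[OF C_bounded] by (simp add: dist_norm)
  note mp = metric_proj[OF C_ne C_closed C_convex]
  have xtC: "xt t \<in> C" if "t \<ge> 1" for t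
    using that
  proof (induction t rule: nat_induct_at_least)
    case base then show ?case using xt1 by simp
  next
    case (Suc n) then show ?case using step_t[of n] mp(1) by simp
  qed
  have xC: "x t \<in> C" if "t \<ge> 1" for t using step_x[OF that] mp(1) by simp
  define q where "q t = (SOME g. g \<in> subdiff (\<phi>h t) (x t))" for t
  have qs: "q t \<in> subdiff (\<phi>h t) (x t)" if "t \<ge> 1" for t
  proof -
    have "subdiff (\<phi>h t) (x t) \<noteq> {}" using phih_dom xC[OF that] unfolding dom_subdiff_def by blast
    then show ?thesis unfolding q_def by (metis some_in_eq)
  qed
  define s where "s t = (norm (xs t - q t))\<^sup>2" for t
  define c where "c t = I * L\<^sup>2 * (norm (x t - xt t))\<^sup>2" for t
  have per: "real_of_ereal (\<phi> t (x t)) - real_of_ereal (\<phi> t (z t))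
      \<le> ((norm (xt t - z t))\<^sup>2 - (norm (xt (t+1) - z t))\<^sup>2) / (2 * \<eta>) + \<eta> * (s t + c t)"
    if t: "t \<in> {1..T}" for t
  proof -
    have t1: "t \<ge> 1" using t by simp
    have zC: "z t \<in> C" using z_in[OF t] .
    have g: "xs t \<in> subdiff (\<phi> t) (x t)" using grad[OF t1] .
    then have fx: "\<phi> t (x t) \<noteq> \<infinity>" "\<phi> t (x t) \<noteq> -\<infinity>"
      and sg: "\<phi> t (z t) \<ge> \<phi> t (x t) + ereal (inner (xs t) (z t - x t))"
      unfolding subdiff_def by auto
    have "subdiff (\<phi> t) (z t) \<noteq> {}" using phi_dom zC unfolding dom_subdiff_def by blast
    then have fz: "\<phi> t (z t) \<noteq> \<infinity>" "\<phi> t (z t) \<noteq> -\<infinity>" unfolding subdiff_def by auto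
    obtain a where a: "\<phi> t (x t) = ereal a" using fx by (cases "\<phi> t (x t)") auto
    obtain b where b: "\<phi> t (z t) = ereal b" using fz by (cases "\<phi> t (z t)") auto
    have "b \<ge> a + inner (xs t) (z t - x t)" using sg a b by simp
    then have "a - b \<le> inner (xs t) (x t - z t)" by (simp add: inner_diff_right)
    also have "\<dots> \<le> ((norm (xt t - z t))\<^sup>2 - (norm (xt (t+1) - z t))\<^sup>2) / (2 * \<eta>)
       + \<eta> * ((norm (xs t - q t))\<^sup>2 + (if \<eta> > 1 / (sqrt 2 * L) then 1 else 0) * L\<^sup>2 * (norm (x t - xt t))\<^sup>2)"
    proof (rule step_ineq[OF eta_pos L_pos])
      show "inner (xt t - \<eta> *\<^sub>R xs t - xt (t+1)) (z t - xt (t+1)) \<le> 0"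
        using mp(2)[OF zC, of "xt t - \<eta> *\<^sub>R xs t"] step_t[OF t1] by simp
      show "inner (xt t - \<eta> *\<^sub>R xhs t - x t) (xt (t+1) - x t) \<le> 0"
        using mp(2)[OF xtC, of "t+1" "xt t - \<eta> *\<^sub>R xhs t"] step_x[OF t1] by simp
      show "norm (q t - xhs t) \<le> L * norm (x t - xt t)"
        using phih_lip[OF xC[OF t1] xtC[OF t1] qs[OF t1] pred[OF t1]] .
    qed
    finally show ?thesis using a b unfolding s_def c_def I_def by simp
  qed
  have sumle: "(\<Sum>t=1..T. real_of_ereal (\<phi> t (x t)) - real_of_ereal (\<phi> t (z t)))
     \<le> (\<Sum>t=1..T. ((norm (xt t - z t))\<^sup>2 - (norm (xt (t+1) - z t))\<^sup>2) / (2 * \<eta>) + \<eta> * (s t + c t))"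
    by (rule sum_mono) (rule per)
  also have "\<dots> = (\<Sum>t=1..T. (norm (xt t - z t))\<^sup>2 - (norm (xt (t+1) - z t))\<^sup>2) / (2 * \<eta>) + \<eta> * (\<Sum>t=1..T. s t + c t)"
    by (simp add: sum.distrib sum_divide_distrib sum_distrib_left[symmetric] distrib_left)
  also have "\<dots> \<le> \<rho> * (\<rho> + 2 * P) / (2 * \<eta>) + \<eta> * (\<Sum>t=1..T. s t + c t)"
  proof -
    have tel: "(\<Sum>t=1..T. (norm (xt t - z t))\<^sup>2 - (norm (xt (t+1) - z t))\<^sup>2) + (norm (xt (T+1) - z T))\<^sup>2
       \<le> \<rho>\<^sup>2 + 2 * \<rho> * P"
      unfolding P_def
      by (rule telescope[OF _ T_ge order.refl]) (intro diam xtC z_in; simp)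
    have "(\<Sum>t=1..T. (norm (xt t - z t))\<^sup>2 - (norm (xt (t+1) - z t))\<^sup>2) \<le> \<rho> * (\<rho> + 2 * P)"
      using tel by (simp add: power2_eq_square algebra_simps) (smt (verit) zero_le_square)
    then show ?thesis using eta_pos by (simp add: divide_right_mono)
  qed
  finally have real_bound: "(\<Sum>t=1..T. real_of_ereal (\<phi> t (x t)) - real_of_ereal (\<phi> t (z t)))
     \<le> \<rho> * (\<rho> + 2 * P) / (2 * \<eta>) + \<eta> * (\<Sum>t=1..T. s t + c t)" .
  define S where "S t = (SUP (u, g, gh) \<in> {(u, g, gh). u \<in> C \<and> g \<in> subdiff (\<phi> t) u \<and> gh \<in> subdiff (\<phi>h t) u}.
               ereal ((norm (g - gh))\<^sup>2))" for t
  have Sle: "ereal (s t) \<le> S t" if "t \<in> {1..T}" for t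
  proof -
    have t1: "t \<ge> 1" using that by simp
    have mem: "(x t, xs t, q t) \<in> {(u, g, gh). u \<in> C \<and> g \<in> subdiff (\<phi> t) u \<and> gh \<in> subdiff (\<phi>h t) u}"
      using xC[OF t1] grad[OF t1] qs[OF t1] by simp
    show ?thesis unfolding S_def s_def
      by (rule SUP_upper2[OF mem]) simp
  qed
  have "ereal (\<Sum>t=1..T. s t + c t) = (\<Sum>t=1..T. ereal (s t) + ereal (c t))" by simp
  also have "\<dots> \<le> (\<Sum>t=1..T. S t + ereal (c t))"
    by (intro sum_mono add_right_mono Sle)
  finally have e1: "ereal (\<Sum>t=1..T. s t + c t) \<le> (\<Sum>t=1..T. S t + ereal (c t))" .
  have e2: "ereal \<eta> * ereal (\<Sum>t=1..T. s t + c t) \<le> ereal \<eta> * (\<Sum>t=1..T. S t + ereal (c t))"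
    using e1 eta_pos by (intro ereal_mult_left_mono) auto
  have "ereal (\<Sum>t=1..T. real_of_ereal (\<phi> t (x t)) - real_of_ereal (\<phi> t (z t)))
     \<le> ereal (\<rho> * (\<rho> + 2 * P) / (2 * \<eta>)) + ereal \<eta> * ereal (\<Sum>t=1..T. s t + c t)"
    using real_bound by simp
  also have "\<dots> \<le> ereal (\<rho> * (\<rho> + 2 * P) / (2 * \<eta>)) + ereal \<eta> * (\<Sum>t=1..T. S t + ereal (c t))"
    using e2 by (rule add_left_mono)
  finally show ?thesis unfolding S_def c_def I_def \<rho>_def P_def .
qed


end
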